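(* Let $K\subseteq\mathbb{R}^d$ be a proper locally anti-blocking body and $i\in\{1,\dots,d\}$. Then $$\mu_i(K)=\max\Big\{\mu(K\cap L_I): I\subseteq\{1,\dots,d\},\ |I|=i\Big\},$$ where $L_I=\operatorname{span}_{\mathbb{R}}\{e_k:k\in I\}$ and $\mu(K\cap L_I)$ is the covering radius of $K\cap L_I$ with respect to $\mathbb{Z}^d\cap L_I$ inside $L_I$.
   Context: A convex body is a full-dimensional compact convex set. For $I\subseteq\{1,\dots,d\}$, $L_I$ is the coordinate subspace spanned by the standard basis vectors $e_k$, $k\in I$, and $\pi_{L_I}$ the orthogonal projection onto it. A convex body $K\subseteq\mathbb{R}^d$ is locally anti-blocking if $K\cap L_I=\pi_{L_I}(K)$ for every $I\subseteq\{1,\dots,d\}$; it is proper if it contains the origin in its interior. For $i\in\{1,\dots,d\}$, $\mu_i(K)=\min\{\mu\ge0:(\mu K+\mathbb{Z}^d)\cap U\ne\emptyset$ for every $(d-i)$-dimensional affine subspace $U\subseteq\mathbb{R}^d\}$. For a convex body $C$ in a subspace $E$ with lattice $\Gamma\subseteq E$, the covering radius is $\min\{\mu\ge0:\mu C+\Gamma=E\}$. *)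

theory Defs
  imports "HOL-Analysis.Analysis"
begin

text \<open>We work in R^d rendered as real^'n, with d = CARD('n); coordinates are indexed by 'n.\<close>

definition convex_body :: "(real^'n) set \<Rightarrow> bool" where
  "convex_body K \<longleftrightarrow> convex K \<and> compact K \<and> interior K \<noteq> {}"

definition coord_subspace :: "'n set \<Rightarrow> (real^'n) set" where
  "coord_subspace I = span ((\<lambda>k. axis k (1::real)) ` I)"

definition coord_proj :: "'n set \<Rightarrow> real^'n \<Rightarrow> real^'n" where
  "coord_proj I x = (\<chi> k. if k \<in> I then x $ k else 0)"

definition locally_anti_blocking :: "(real^'n) set \<Rightarrow> bool" where
  "locally_anti_blocking K \<longleftrightarrow> convex_body K \<and>
     (\<forall>I. K \<inter> coord_subspace I = coord_proj I ` K)"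

definition proper_body :: "(real^'n) set \<Rightarrow> bool" where
  "proper_body K \<longleftrightarrow> 0 \<in> interior K"

definition int_lattice :: "(real^'n) set" where
  "int_lattice = {x. \<forall>k. x $ k \<in> \<int>}"

definition dil_plus :: "real \<Rightarrow> (real^'n) set \<Rightarrow> (real^'n) set \<Rightarrow> (real^'n) set" where
  "dil_plus \<mu> C G = {\<mu> *\<^sub>R c + g | c g. c \<in> C \<and> g \<in> G}"

definition mu_i :: "(real^'n) set \<Rightarrow> nat \<Rightarrow> real" where
  "mu_i K i = Inf {\<mu>. \<mu> \<ge> 0 \<and>
     (\<forall>U. affine U \<and> U \<noteq> {} \<and> aff_dim U = int CARD('n) - int i \<longrightarrow>
          dil_plus \<mu> K int_lattice \<inter> U \<noteq> {})}"

definition covering_radius :: "(real^'n) set \<Rightarrow> (real^'n) set \<Rightarrow> (real^'n) set \<Rightarrow> real" where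
  "covering_radius C E G = Inf {\<mu>. \<mu> \<ge> 0 \<and> dil_plus \<mu> C G = E}"

end

theory Submission
  imports Defs
begin


lemma coord_sub_char: "coord_subspace I = {x. \<forall>k. k \<notin> I \<longrightarrow> x $ k = 0}"
proof
  have sub: "subspace {x::real^'a. \<forall>k. k \<notin> I \<longrightarrow> x $ k = 0}"
    by (auto simp: subspace_def)
  show "coord_subspace I \<subseteq> {x. \<forall>k. k \<notin> I \<longrightarrow> x $ k = 0}"
    unfolding coord_subspace_def
    by (rule span_minimal[OF _ sub]) (auto simp: axis_def)
next
  show "{x::real^'a. \<forall>k. k \<notin> I \<longrightarrow> x $ k = 0} \<subseteq> coord_subspace I"
  proof
    fix x :: "real^'a" assume x: "x \<in> {x. \<forall>k. k \<notin> I \<longrightarrow> x $ k = 0}"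
    have "x = (\<Sum>k\<in>I. x $ k *\<^sub>R axis k 1)"
    proof (subst vec_eq_iff, intro allI)
      fix j
      have "(\<Sum>k\<in>I. x $ k *\<^sub>R axis k (1::real)) $ j = (\<Sum>k\<in>I. x $ k * (if j = k then 1 else 0))"
        by (simp add: axis_def)
      also have "\<dots> = x $ j"
        using x by (cases "j \<in> I") (auto simp: if_distrib sum.delta cong: if_cong)
      finally show "x $ j = (\<Sum>k\<in>I. x $ k *\<^sub>R axis k 1) $ j" by simp
    qed
    also have "\<dots> \<in> coord_subspace I"
      unfolding coord_subspace_def
      by (intro span_sum span_mul span_base) auto
    finally show "x \<in> coord_subspace I" .
  qed
qed

lemma coord_sub_subspace: "subspace (coord_subspace I)"
  unfolding coord_subspace_def by (rule subspace_span)

lemma coord_sub_dim: "dim (coord_subspace (I::'a::finite set)) = card I"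
proof -
  have inj: "inj_on (\<lambda>k::'a. axis k (1::real)) I"
    by (auto simp: inj_on_def axis_eq_axis)
  have "(\<lambda>k::'a. axis k (1::real)) ` I \<subseteq> Basis"
    by auto
  then have ind: "independent ((\<lambda>k::'a. axis k (1::real)) ` I)"
    using independent_Basis independent_mono by blast
  show ?thesis
    unfolding coord_subspace_def dim_span
    using dim_eq_card_independent[OF ind] card_image[OF inj] by simp
qed


lemma complement_exists:
  fixes V :: "(real^'n) set"
  assumes V: "subspace V" and d: "dim V + i = CARD('n)"
  shows "\<exists>I. card I = i \<and> (\<forall>z. \<exists>v\<in>V. \<exists>l\<in>coord_subspace I. z = v + l)"
proof -
  obtain B where B: "B \<subseteq> V" "independent B" "V \<subseteq> span B" "card B = dim V"
    by (rule basis_exists)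
  define A where "A = range (\<lambda>k::'n. axis k (1::real))"
  obtain C where C: "B \<subseteq> C" "C \<subseteq> B \<union> A" "independent C" "B \<union> A \<subseteq> span C"
    using maximal_independent_subset_extend[of B "B \<union> A"] B(2) by blast
  have finC: "finite C" using C(3) independent_bound by blast
  have cardC: "card C \<le> CARD('n)"
  proof -
    have "card C = dim C" using dim_eq_card_independent[OF C(3)] by simp
    also have "\<dots> \<le> dim (UNIV :: (real^'n) set)" by (rule dim_subset) simp
    also have "\<dots> = CARD('n)"
      using coord_sub_dim[of "UNIV::'n set"] by (simp add: coord_sub_char)
    finally show ?thesis .
  qed
  define J where "J = {k. axis k (1::real) \<in> C - B}"
  have CB: "C - B = (\<lambda>k. axis k 1) ` J"
    using C(2) unfolding J_def A_def by auto
  have inj: "inj_on (\<lambda>k::'n. axis k (1::real)) J"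
    by (auto simp: inj_on_def axis_eq_axis)
  have "card J = card (C - B)" using CB card_image[OF inj] by simp
  also have "\<dots> = card C - card B" using C(1) finC by (meson card_Diff_subset finite_subset)
  also have "\<dots> \<le> i" using cardC B(4) d by linarith
  finally have cJ: "card J \<le> i" .
  obtain I where I: "J \<subseteq> I" "card I = i"
    using exists_subset_between[of J i "UNIV::'n set"] cJ d by auto
  have "\<forall>z. \<exists>v\<in>V. \<exists>l\<in>coord_subspace I. z = v + l"
  proof
    fix z :: "real^'n"
    have "UNIV \<subseteq> span A"
      using coord_sub_char[of "UNIV::'n set"] unfolding coord_subspace_def A_def by auto
    also have "span A \<subseteq> span C" using C(4) by (simp add: span_minimal)
    finally have "z \<in> span C" by auto
    also have "span C = span (B \<union> (C - B))" using C(1) by (simp add: Un_absorb1)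
    finally obtain b c where bc: "z = b + c" "b \<in> span B" "c \<in> span (C - B)"
      unfolding span_Un by blast
    have "b \<in> V" using bc(2) B(1) V by (meson span_minimal subsetD)
    moreover have "c \<in> coord_subspace I"
      using bc(3) unfolding CB coord_subspace_def
      by (meson I(1) image_mono span_mono subsetD)
    ultimately show "\<exists>v\<in>V. \<exists>l\<in>coord_subspace I. z = v + l" using bc(1) by blast
  qed
  then show ?thesis using I(2) by blast
qed


lemma dil_sub:
  assumes "C \<subseteq> coord_subspace I" "G \<subseteq> coord_subspace I"
  shows "dil_plus \<mu> C G \<subseteq> coord_subspace I"
  using assms coord_sub_subspace[of I] unfolding dil_plus_def
  by (auto intro!: subspace_add subspace_scale)

lemma cov_nonempty:
  fixes K :: "(real^'n) set"
  assumes "ball 0 r \<subseteq> K" "r > 0"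
  shows "(CARD('n) + 1) / r \<in> {\<mu>. \<mu> \<ge> 0 \<and> dil_plus \<mu> (K \<inter> coord_subspace I) (int_lattice \<inter> coord_subspace I) = coord_subspace I}"
proof -
  define m where "m = (CARD('n) + 1) / r"
  have m: "m > 0" using assms by (simp add: m_def)
  have "coord_subspace I \<subseteq> dil_plus m (K \<inter> coord_subspace I) (int_lattice \<inter> coord_subspace I)"
  proof
    fix x :: "real^'n" assume x: "x \<in> coord_subspace I"
    define g :: "real^'n" where "g = (\<chi> k. of_int \<lfloor>x $ k\<rfloor>)"
    define f where "f = x - g"
    have gZ: "g \<in> int_lattice" by (simp add: g_def int_lattice_def)
    have gI: "g \<in> coord_subspace I" using x by (simp add: coord_sub_char g_def)
    have fI: "f \<in> coord_subspace I" using x gI by (simp add: coord_sub_char f_def)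
    have "norm f \<le> (\<Sum>k\<in>UNIV. \<bar>f $ k\<bar>)" by (rule norm_le_l1_cart)
    also have "\<dots> \<le> (\<Sum>k\<in>(UNIV::'n set). 1)"
      apply (rule sum_mono)
      by (simp add: f_def g_def) linarith
    also have "\<dots> < m * r" using assms by (simp add: m_def)
    finally have "norm ((1/m) *\<^sub>R f) < r" using m by (simp add: field_simps)
    then have "(1/m) *\<^sub>R f \<in> K" using assms(1) by auto
    moreover have "(1/m) *\<^sub>R f \<in> coord_subspace I"
      using fI coord_sub_subspace subspace_scale by blast
    moreover have "x = m *\<^sub>R ((1/m) *\<^sub>R f) + g" using m by (simp add: f_def)
    ultimately show "x \<in> dil_plus m (K \<inter> coord_subspace I) (int_lattice \<inter> coord_subspace I)"
      unfolding dil_plus_def using gZ gI by blast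
  qed
  then show ?thesis using m dil_sub[of "K \<inter> coord_subspace I" I "int_lattice \<inter> coord_subspace I" m]
    unfolding m_def[symmetric] by auto
qed

lemma cov_up:
  fixes C :: "(real^'n) set"
  assumes "convex C" "0 \<in> C" "\<mu> \<ge> 0" "\<mu> \<le> \<mu>'"
  shows "dil_plus \<mu> C G \<subseteq> dil_plus \<mu>' C G"
proof
  fix x assume "x \<in> dil_plus \<mu> C G"
  then obtain c g where cg: "x = \<mu> *\<^sub>R c + g" "c \<in> C" "g \<in> G" unfolding dil_plus_def by blast
  show "x \<in> dil_plus \<mu>' C G"
  proof (cases "\<mu>' = 0")
    case True
    then have "\<mu> = 0" using assms by simp
    then show ?thesis using cg True unfolding dil_plus_def by blast
  next
    case False
    then have p: "\<mu>' > 0" using assms by simp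
    have "(\<mu>/\<mu>') *\<^sub>R c + (1 - \<mu>/\<mu>') *\<^sub>R 0 \<in> C"
      using assms p cg(2) by (intro convexD[OF assms(1)]) (auto simp: field_simps)
    moreover have "x = \<mu>' *\<^sub>R ((\<mu>/\<mu>') *\<^sub>R c + (1 - \<mu>/\<mu>') *\<^sub>R 0) + g"
      using p cg(1) by simp
    ultimately show ?thesis using cg(3) unfolding dil_plus_def by blast
  qed
qed


lemma proj_lemma:
  fixes K :: "(real^'n) set"
  assumes lab: "locally_anti_blocking K"
    and S: "\<mu> \<ge> 0" "\<forall>U. affine U \<and> U \<noteq> {} \<and> aff_dim U = int CARD('n) - int (card I) \<longrightarrow>
          dil_plus \<mu> K int_lattice \<inter> U \<noteq> {}"
  shows "coord_subspace I \<subseteq> dil_plus \<mu> (K \<inter> coord_subspace I) (int_lattice \<inter> coord_subspace I)"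
proof
  fix x :: "real^'n" assume x: "x \<in> coord_subspace I"
  define U where "U = (+) x ` coord_subspace (-I)"
  have "affine U" unfolding U_def
    using coord_sub_subspace affine_translation subspace_imp_affine by blast
  moreover have "U \<noteq> {}" unfolding U_def using coord_sub_subspace subspace_0 by blast
  moreover have "aff_dim U = int CARD('n) - int (card I)"
  proof -
    have "aff_dim U = int (card (-I))" unfolding U_def aff_dim_translation_eq
      using aff_dim_subspace[OF coord_sub_subspace] coord_sub_dim by metis
    also have "card (-I) = CARD('n) - card I"
      by (simp add: Compl_eq_Diff_UNIV card_Diff_subset)
    finally show ?thesis by (simp add: card_mono of_nat_diff)
  qed
  ultimately obtain y where y: "y \<in> dil_plus \<mu> K int_lattice" "y \<in> U" using S(2) by blast
  then obtain c g where cg: "y = \<mu> *\<^sub>R c + g" "c \<in> K" "g \<in> int_lattice" unfolding dil_plus_def by blast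
  obtain w where w: "y = x + w" "w \<in> coord_subspace (-I)" using y(2) unfolding U_def by blast
  have pc: "coord_proj I c \<in> K \<inter> coord_subspace I"
    using lab cg(2) unfolding locally_anti_blocking_def by blast
  have pg: "coord_proj I g \<in> int_lattice \<inter> coord_subspace I"
    using cg(3) by (auto simp: int_lattice_def coord_proj_def coord_sub_char)
  have "x = \<mu> *\<^sub>R coord_proj I c + coord_proj I g"
  proof (subst vec_eq_iff, intro allI)
    fix k
    have "y $ k = x $ k + w $ k" using w(1) by simp
    then show "x $ k = (\<mu> *\<^sub>R coord_proj I c + coord_proj I g) $ k"
      using x w(2) cg(1) by (cases "k \<in> I") (auto simp: coord_sub_char coord_proj_def)
  qed
  then show "x \<in> dil_plus \<mu> (K \<inter> coord_subspace I) (int_lattice \<inter> coord_subspace I)"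
    using pc pg unfolding dil_plus_def by blast
qed


theorem corollary3p3:
  fixes K :: "(real^'n) set" and i :: nat
  assumes "locally_anti_blocking K" and "proper_body K"
    and "1 \<le> i" and "i \<le> CARD('n)"
  shows "mu_i K i = Max {covering_radius (K \<inter> coord_subspace I) (coord_subspace I)
                           (int_lattice \<inter> coord_subspace I) | I. card I = i}"
proof -
  define CI where "CI I = {\<mu>. \<mu> \<ge> 0 \<and> dil_plus \<mu> (K \<inter> coord_subspace I) (int_lattice \<inter> coord_subspace I) = coord_subspace I}" for I
  define cov where "cov I = covering_radius (K \<inter> coord_subspace I) (coord_subspace I) (int_lattice \<inter> coord_subspace I)" for I
  have covI: "cov I = Inf (CI I)" for I unfolding cov_def CI_def covering_radius_def by simp
  define S where "S = {\<mu>. \<mu> \<ge> 0 \<and>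
     (\<forall>U. affine U \<and> U \<noteq> {} \<and> aff_dim U = int CARD('n) - int i \<longrightarrow>
          dil_plus \<mu> K int_lattice \<inter> U \<noteq> {})}"
  have muS: "mu_i K i = Inf S" unfolding mu_i_def S_def by simp
  define A where "A = {cov I | I. card I = i}"
  have A_eq: "{covering_radius (K \<inter> coord_subspace I) (coord_subspace I)
                           (int_lattice \<inter> coord_subspace I) | I. card I = i} = A"
    unfolding A_def cov_def by simp
  have cK: "convex K" and K0: "0 \<in> interior K"
    using assms(1,2) unfolding locally_anti_blocking_def convex_body_def proper_body_def by auto
  have K0': "0 \<in> K" using K0 interior_subset by blast
  obtain r where r: "r > 0" "ball 0 r \<subseteq> K" using K0 by (meson mem_interior)
  have ne: "CI I \<noteq> {}" for I using cov_nonempty[OF r(2) r(1), of I] unfolding CI_def by blast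
  have bdd: "bdd_below (CI I)" for I unfolding CI_def bdd_below_def by auto
  have cov_le: "\<mu> \<in> CI I \<Longrightarrow> cov I \<le> \<mu>" for \<mu> I using covI cInf_lower[OF _ bdd] by simp
  have cov_ge0: "cov I \<ge> 0" for I unfolding covI using ne[of I] by (intro cInf_greatest) (auto simp: CI_def)
  have cov_eps: "\<mu> > cov I \<Longrightarrow> \<mu> \<in> CI I" for \<mu> I
  proof -
    assume "\<mu> > cov I"
    then obtain m where m: "m \<in> CI I" "m < \<mu>" using cInf_lessD[OF ne] covI by metis
    have cv: "convex (K \<inter> coord_subspace I)"
      using cK coord_sub_subspace subspace_imp_convex convex_Int by blast
    have z: "0 \<in> K \<inter> coord_subspace I" using K0' coord_sub_subspace subspace_0 by blast
    have "dil_plus m (K \<inter> coord_subspace I) (int_lattice \<inter> coord_subspace I) \<subseteq> dil_plus \<mu> (K \<inter> coord_subspace I) (int_lattice \<inter> coord_subspace I)"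
      using m unfolding CI_def by (intro cov_up[OF cv z]) auto
    moreover have "dil_plus \<mu> (K \<inter> coord_subspace I) (int_lattice \<inter> coord_subspace I) \<subseteq> coord_subspace I"
      by (rule dil_sub) auto
    ultimately show "\<mu> \<in> CI I" using m unfolding CI_def by auto
  qed
  have finA: "finite A" unfolding A_def by simp
  have "\<exists>B::'n set. card B = i" using exists_subset_between[of "{}" i "UNIV::'n set"] assms(4) by simp
  then obtain I0 :: "'n set" where I0: "card I0 = i" by blast
  have neA: "A \<noteq> {}" unfolding A_def using I0 by blast
  define M where "M = Max A"
  have covM: "card I = i \<Longrightarrow> cov I \<le> M" for I
  proof -
    assume "card I = i"
    then have "cov I \<in> A" unfolding A_def by blast
    then show ?thesis unfolding M_def using Max_ge[OF finA] by blast
  qed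
  have M0: "M \<ge> 0" using covM[OF I0] cov_ge0[of I0] by simp
  have inS: "M + e \<in> S" if e: "e > 0" for e
  proof -
    have "\<forall>U. affine U \<and> U \<noteq> {} \<and> aff_dim U = int CARD('n) - int i \<longrightarrow>
          dil_plus (M + e) K int_lattice \<inter> U \<noteq> {}"
    proof (intro allI impI)
      fix U :: "(real^'n) set" assume U: "affine U \<and> U \<noteq> {} \<and> aff_dim U = int CARD('n) - int i"
      then obtain u where u: "u \<in> U" by blast
      define V where "V = (\<lambda>x. x - u) ` U"
      have V: "subspace V" unfolding V_def using affine_diffs_subspace_subtract U u by blast
      have "aff_dim U = int (dim V)" unfolding V_def
        by (rule aff_dim_eq_dim_subtract) (simp add: u hull_inc)
      then have dV: "dim V + i = CARD('n)" using U assms(4) by linarith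
      obtain I where I: "card I = i" "\<forall>z. \<exists>v\<in>V. \<exists>l\<in>coord_subspace I. z = v + l"
        using complement_exists[OF V dV] by blast
      then obtain v l where vl: "v \<in> V" "l \<in> coord_subspace I" "- u = v + l" by blast
      then obtain y where y: "y \<in> U" "v = y - u" unfolding V_def by blast
      have "y = - l" using vl(3) y(2) by (simp add: algebra_simps eq_neg_iff_add_eq_0)
      then have yI: "y \<in> coord_subspace I" using vl(2) coord_sub_subspace subspace_neg by blast
      have "M + e \<in> CI I" using covM[OF I(1)] e by (intro cov_eps) simp
      then have "y \<in> dil_plus (M + e) (K \<inter> coord_subspace I) (int_lattice \<inter> coord_subspace I)"
        using yI unfolding CI_def by auto
      then have "y \<in> dil_plus (M + e) K int_lattice" unfolding dil_plus_def by blast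
      then show "dil_plus (M + e) K int_lattice \<inter> U \<noteq> {}" using y(1) by blast
    qed
    then show ?thesis unfolding S_def using M0 e by simp
  qed
  have bddS: "bdd_below S" unfolding S_def bdd_below_def by auto
  have "Inf S \<le> M"
  proof (rule field_le_epsilon)
    fix e :: real assume "e > 0"
    then show "Inf S \<le> M + e" using cInf_lower[OF inS bddS] by simp
  qed
  moreover have "M \<le> Inf S"
  proof (rule cInf_greatest)
    show "S \<noteq> {}" using inS[of 1] by auto
    fix \<mu> assume mu: "\<mu> \<in> S"
    show "M \<le> \<mu>" unfolding M_def
    proof (rule Max.boundedI[OF finA neA])
      fix a assume "a \<in> A"
      then obtain I where I: "a = cov I" "card I = i" unfolding A_def by blast
      have "coord_subspace I \<subseteq> dil_plus \<mu> (K \<inter> coord_subspace I) (int_lattice \<inter> coord_subspace I)"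
        using proj_lemma[OF assms(1), of \<mu> I] mu I(2) unfolding S_def by auto
      moreover have "dil_plus \<mu> (K \<inter> coord_subspace I) (int_lattice \<inter> coord_subspace I) \<subseteq> coord_subspace I"
        by (rule dil_sub) auto
      ultimately have "\<mu> \<in> CI I" using mu unfolding CI_def S_def by auto
      then show "a \<le> \<mu>" using cov_le I(1) by simp
    qed
  qed
  ultimately show ?thesis using muS A_eq M_def by simp
qed

end
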